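(* Let $\bar{\boldsymbol{\Psi}}_{\mathrm{id}}=\mathrm{diag}(\bar\psi_{\mathrm{id},1},\dots,\bar\psi_{\mathrm{id},N})$ with all entries positive, $\bar\psi_{\mathrm{f},1}>0$, $\mathbf{w}_1=(w_{11},\dots,w_{1N})^\top\in\mathbb{R}^N\setminus\{\mathbf{0}\}$, $\theta\in[0,1]$, and $\alpha_1,\dots,\alpha_T>0$, $\beta_1,\dots,\beta_T>0$ with $\sum_t\alpha_t=\sum_t\beta_t=1$. For nonzero $\mathbf{x}_0\in\mathbb{R}^N$ let $$\Upsilon(\mathbf{x}_0)=\frac{\sum_{t=1}^T(\alpha_t(1-\theta)+\beta_t\theta)^2\,\mathbf{x}_0^\top\left(\alpha_t\bar{\boldsymbol{\Psi}}_{\mathrm{id}}+\beta_t\bar\psi_{\mathrm{f},1}\mathbf{w}_1\mathbf{w}_1^\top\right)^{-1}\mathbf{x}_0}{\mathbf{x}_0^\top\left(\bar{\boldsymbol{\Psi}}_{\mathrm{id}}+\bar\psi_{\mathrm{f},1}\mathbf{w}_1\mathbf{w}_1^\top\right)^{-1}\mathbf{x}_0},$$ $\gamma_t=\beta_t/\alpha_t$, $\eta_1=\bar\psi_{\mathrm{f},1}\mathbf{w}_1^\top\bar{\boldsymbol{\Psi}}_{\mathrm{id}}^{-1}\mathbf{w}_1$, $\Delta=\sum_{t=1}^T\frac{\alpha_t(1-\theta(1-\gamma_t))^2(1-\gamma_t)}{1+\eta_1\gamma_t}$, and $\eta_{1,i}=\frac{w_{1i}^2\bar\psi_{\mathrm{f},1}}{\bar\psi_{\mathrm{id},i}}$.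 Then for each standard basis vector $\mathbf{e}_i$, $$\Upsilon(\mathbf{e}_i)=1+\theta^2\Big(\sum_{t=1}^T\frac{\beta_t^2}{\alpha_t}-1\Big)+\frac{\eta_{1,i}}{1+\eta_1-\eta_{1,i}}\,\Delta,$$ and $$\arg\max_{i=1,\dots,N}\Upsilon(\mathbf{e}_i)=\begin{cases}\arg\max_{i}\ w_{1i}^2/\bar\psi_{\mathrm{id},i}&\text{if }\Delta\ge0,\\ \arg\min_{i}\ w_{1i}^2/\bar\psi_{\mathrm{id},i}&\text{if }\Delta\le0.\end{cases}$$
   Context: $\Upsilon(\mathbf{x}_0)$ is the ratio of the expected cost of the separable schedule $(\alpha_t(1-\theta)+\beta_t\theta)\mathbf{x}_0$ to the minimal expected cost of liquidating $\mathbf{x}_0$, with time-$t$ impact matrix $\mathbf{G}_t=\left(\alpha_t\bar{\boldsymbol{\Psi}}_{\mathrm{id}}+\beta_t\bar\psi_{\mathrm{f},1}\mathbf{w}_1\mathbf{w}_1^\top\right)^{-1}$ and cost $\sum_t\tfrac12\mathbf{v}_t^\top\mathbf{G}_t\mathbf{v}_t$; $\mathbf{e}_i$ corresponds to liquidating a single order in stock $i$. *)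

theory Defs
  imports "HOL-Analysis.Analysis"
begin

definition diag_mat :: "(real ^ 'n) \<Rightarrow> real ^ 'n ^ 'n" where
  "diag_mat d = (\<chi> i j. if i = j then d $ i else 0)"

definition outer :: "real ^ 'n \<Rightarrow> real ^ 'n \<Rightarrow> real ^ 'n ^ 'n" where
  "outer u v = (\<chi> i j. u $ i * v $ j)"

definition qform :: "real ^ 'n ^ 'n \<Rightarrow> real ^ 'n \<Rightarrow> real" where
  "qform M x = x \<bullet> (M *v x)"

definition impact :: "real ^ 'n \<Rightarrow> real \<Rightarrow> real ^ 'n \<Rightarrow> real \<Rightarrow> real \<Rightarrow> real ^ 'n ^ 'n" where
  "impact psi_id psi_f w a b = a *\<^sub>R diag_mat psi_id + (b * psi_f) *\<^sub>R outer w w"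

text \<open>Upsilon(x0): ratio of separable-schedule cost to minimal cost; times t = 1..T.\<close>
definition Upsilon ::
  "real ^ 'n \<Rightarrow> real \<Rightarrow> real ^ 'n \<Rightarrow> real \<Rightarrow> nat \<Rightarrow> (nat \<Rightarrow> real) \<Rightarrow> (nat \<Rightarrow> real) \<Rightarrow> real ^ 'n \<Rightarrow> real" where
  "Upsilon psi_id psi_f w \<theta> T \<alpha> \<beta> x0 =
     (\<Sum>t\<in>{1..T}. (\<alpha> t * (1 - \<theta>) + \<beta> t * \<theta>)\<^sup>2 *
        qform (matrix_inv (impact psi_id psi_f w (\<alpha> t) (\<beta> t))) x0)
     / qform (matrix_inv (impact psi_id psi_f w 1 1)) x0"

definition argmax_set :: "('n \<Rightarrow> real) \<Rightarrow> 'n set" where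
  "argmax_set f = {i. \<forall>j. f j \<le> f i}"

definition argmin_set :: "('n \<Rightarrow> real) \<Rightarrow> 'n set" where
  "argmin_set f = {i. \<forall>j. f i \<le> f j}"

end

theory Submission
  imports Defs
begin

lemma inv_unique:
  fixes A N :: "real^'n^'n"
  assumes "A ** N = mat 1"
  shows "matrix_inv A = N"
proof -
  have NA: "N ** A = mat 1" using assms matrix_left_right_inverse by blast
  have "\<exists>A'. A ** A' = mat 1 \<and> A' ** A = mat 1" using assms NA by blast
  then have h: "A ** matrix_inv A = mat 1 \<and> matrix_inv A ** A = mat 1"
    unfolding matrix_inv_def by (rule someI_ex)
  have "matrix_inv A = (N ** A) ** matrix_inv A" using NA by (simp add: matrix_mul_lid)
  also have "\<dots> = N ** (A ** matrix_inv A)" by (simp add: matrix_mul_assoc)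
  also have "\<dots> = N" using h by (simp add: matrix_mul_rid)
  finally show ?thesis .
qed

lemma sm_inv:
  fixes psi w :: "real^'n" and a b c :: real
  assumes psi: "\<And>i. psi $ i > 0" and a: "a > 0" and b: "b > 0" and c: "c > 0"
  defines "s \<equiv> (\<Sum>j\<in>UNIV. (w $ j)\<^sup>2 / psi $ j)"
  defines "K \<equiv> b * c / (a\<^sup>2 * (1 + (b / a) * c * s))"
  shows "impact psi c w a b ** (\<chi> j k. (if j = k then 1 / (a * psi $ j) else 0) - K * (w $ j / psi $ j) * (w $ k / psi $ k)) = mat 1"
proof -
  have s0: "s \<ge> 0" unfolding s_def using psi by (intro sum_nonneg) (simp add: less_imp_le)
  have D: "1 + (b / a) * c * s > 0" using a b c s0 by (simp add: add_pos_nonneg)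
  have ws: "(\<Sum>j\<in>UNIV. w $ j * (w $ j / psi $ j)) = s" unfolding s_def
    by (simp add: power2_eq_square)
  show ?thesis
  proof -
    define NN :: "real^'n^'n" where "NN = (\<chi> j k. (if j = k then 1 / (a * psi $ j) else 0) - K * (w $ j / psi $ j) * (w $ k / psi $ k))"
    have entry: "(impact psi c w a b ** NN) $ i $ k = (mat 1 :: real^'n^'n) $ i $ k" for i k
    proof -
    let ?N = "\<lambda>j. (if j = k then 1 / (a * psi $ j) else 0) - K * (w $ j / psi $ j) * (w $ k / psi $ k)"
    have e1: "(\<Sum>j\<in>UNIV. (a * (if i = j then psi $ i else 0) + b * c * w $ i * w $ j) * ?N j)
       = (\<Sum>j\<in>UNIV. (if i = j then a * psi $ i * ?N j else 0)) + b * c * w $ i * (\<Sum>j\<in>UNIV. w $ j * ?N j)"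
    proof -
      have "\<And>j. (a * (if i = j then psi $ i else 0) + b * c * w $ i * w $ j) * ?N j
          = (if i = j then a * psi $ i * ?N j else 0) + b * c * w $ i * (w $ j * ?N j)"
        by (simp add: algebra_simps)
      then show ?thesis by (simp only: sum.distrib sum_distrib_left)
    qed
    have e2: "(\<Sum>j\<in>UNIV. w $ j * ?N j) = w $ k / (a * psi $ k) - K * s * (w $ k / psi $ k)"
    proof -
      have "\<And>j. w $ j * ?N j = (if j = k then w $ k / (a * psi $ k) else 0) - (K * (w $ k / psi $ k)) * (w $ j * (w $ j / psi $ j))"
        by (simp add: algebra_simps)
      then have "(\<Sum>j\<in>UNIV. w $ j * ?N j) = (\<Sum>j\<in>UNIV. (if j = k then w $ k / (a * psi $ k) else 0)) - (K * (w $ k / psi $ k)) * (\<Sum>j\<in>UNIV. w $ j * (w $ j / psi $ j))"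
        by (simp only: sum_subtractf sum_distrib_left)
      then show ?thesis using ws by simp
    qed
    have "(\<Sum>j\<in>UNIV. (a * (if i = j then psi $ i else 0) + b * c * w $ i * w $ j) * ?N j) = (if i = k then 1 else 0)"
    proof -
      have key: "a * K = b * c * (1 / a - K * s)"
      proof -
        have D2: "a + b * c * s > 0" using D a by (simp add: field_simps)
        have "a\<^sup>2 * (1 + (b / a) * c * s) = a * (a + b * c * s)" using a
          by (simp add: field_simps power2_eq_square)
        then have "K = b * c / (a * (a + b * c * s))" unfolding K_def by simp
        then have "K * (a * (a + b * c * s)) = b * c" using a D2 by simp
        then show ?thesis using a by (simp add: field_simps)
      qed
      have e3: "(\<Sum>j\<in>UNIV. (if i = j then a * psi $ i * ?N j else 0)) = a * psi $ i * ?N i"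
        by simp
      have "a * psi $ i * ?N i + b * c * w $ i * (w $ k / (a * psi $ k) - K * s * (w $ k / psi $ k))
          = (if i = k then 1 else 0) + (w $ i * w $ k / psi $ k) * (b * c * (1 / a - K * s) - a * K)"
        using a psi[of i] psi[of k] by (auto simp: field_simps)
      then show ?thesis unfolding e1 e2 e3 key by simp
    qed
    moreover have "(impact psi c w a b ** NN) $ i $ k = (\<Sum>j\<in>UNIV. (a * (if i = j then psi $ i else 0) + b * c * w $ i * w $ j) * ?N j)"
      by (simp add: matrix_matrix_mult_def impact_def diag_mat_def outer_def NN_def mult.assoc)
    moreover have "(mat 1 :: real^'n^'n) $ i $ k = (if i = k then 1 else 0)" by (simp add: mat_def)
    ultimately show ?thesis by simp
    qed
    then show ?thesis unfolding NN_def[symmetric] by (simp add: vec_eq_iff)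
  qed
qed

lemma q_val:
  fixes psi w :: "real^'n" and a b c :: real
  assumes psi: "\<And>i. psi $ i > 0" and a: "a > 0" and b: "b > 0" and c: "c > 0"
  shows "qform (matrix_inv (impact psi c w a b)) (axis i 1)
    = (1 / (a * psi $ i)) * (1 + (b / a) * (c * (\<Sum>j\<in>UNIV. (w $ j)\<^sup>2 / psi $ j) - (w $ i)\<^sup>2 * c / psi $ i))
        / (1 + c * (\<Sum>j\<in>UNIV. (w $ j)\<^sup>2 / psi $ j) * (b / a))"
proof -
  define s where "s = (\<Sum>j\<in>UNIV. (w $ j)\<^sup>2 / psi $ j)"
  define K where "K = b * c / (a\<^sup>2 * (1 + (b / a) * c * s))"
  define NN :: "real^'n^'n" where "NN = (\<chi> j k. (if j = k then 1 / (a * psi $ j) else 0) - K * (w $ j / psi $ j) * (w $ k / psi $ k))"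
  have inv: "matrix_inv (impact psi c w a b) = NN"
    unfolding NN_def K_def s_def by (rule inv_unique, rule sm_inv[OF psi a b c])
  have s0: "s \<ge> 0" unfolding s_def using psi by (intro sum_nonneg) (simp add: less_imp_le)
  have D: "1 + (b / a) * c * s > 0" using a b c s0 by (simp add: add_pos_nonneg)
  have "qform NN (axis i 1) = NN $ i $ i"
  proof -
    have "(NN *v axis i 1) $ i = NN $ i $ i"
    proof -
      have "(\<Sum>j\<in>UNIV. NN $ i $ j * (if j = i then 1 else 0)) = (\<Sum>j\<in>UNIV. if j = i then NN $ i $ j else 0)"
        by (rule sum.cong) auto
      then show ?thesis by (simp add: matrix_vector_mult_def axis_def)
    qed
    then show ?thesis by (simp add: qform_def inner_axis')
  qed
  also have "\<dots> = 1 / (a * psi $ i) - K * (w $ i / psi $ i)\<^sup>2"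
    by (simp add: NN_def power2_eq_square)
  also have "\<dots> = (1 / (a * psi $ i)) * (1 + (b / a) * (c * s - (w $ i)\<^sup>2 * c / psi $ i)) / (1 + c * s * (b / a))"
  proof -
    define E where "E = 1 + (b / a) * c * s"
    have E0: "E \<noteq> 0" using D unfolding E_def by simp
    have h1: "1 + c * s * (b / a) = E" unfolding E_def by (simp add: algebra_simps)
    have h2: "1 + (b / a) * (c * s - (w $ i)\<^sup>2 * c / psi $ i) = E - (b / a) * ((w $ i)\<^sup>2 * c / psi $ i)"
      unfolding E_def by (simp add: algebra_simps)
    have p0: "psi $ i \<noteq> 0" using psi[of i] by simp
    show ?thesis unfolding h1 h2 K_def E_def[symmetric] using a E0 p0
      by (simp add: field_simps power2_eq_square)
  qed
  finally show ?thesis unfolding inv s_def .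
qed

lemma core_id:
  fixes g e ei :: real
  assumes g: "g > 0" and ei: "0 \<le> ei" "ei \<le> e"
  shows "(1 + g * (e - ei)) / (1 + e * g) = ((1 + (e - ei)) / (1 + e)) * (1 + ei / (1 + e - ei) * ((1 - g) / (1 + e * g)))"
proof -
  have e1: "1 + e * g > 0" using g ei by (simp add: add_pos_nonneg)
  have e2: "1 + e - ei > 0" using ei by simp
  have e3: "1 + e > 0" using ei by simp
  have gen: "A / C * (1 + x / A * (y / B)) = (A * B + x * y) / (C * B)"
    if "A \<noteq> 0" "B \<noteq> 0" "C \<noteq> 0" for A B C x y :: real
    using that by (simp add: field_simps)
  have "((1 + (e - ei)) / (1 + e)) * (1 + ei / (1 + e - ei) * ((1 - g) / (1 + e * g)))
      = ((1 + e - ei) * (1 + e * g) + ei * (1 - g)) / ((1 + e) * (1 + e * g))"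
    using gen[of "1 + e - ei" "1 + e * g" "1 + e" ei "1 - g"] e1 e2 e3 by (simp add: add_diff_eq)
  also have "(1 + e - ei) * (1 + e * g) + ei * (1 - g) = (1 + g * (e - ei)) * (1 + e)"
    by (simp add: algebra_simps)
  also have "(1 + g * (e - ei)) * (1 + e) / ((1 + e) * (1 + e * g)) = (1 + g * (e - ei)) / (1 + e * g)"
    using e3 by simp
  finally show ?thesis by simp
qed

lemma scalar_id:
  fixes a b p e ei \<theta> :: real
  assumes a: "a > 0" and b: "b > 0" and p: "p > 0" and ei: "0 \<le> ei" "ei \<le> e"
  shows "(a * (1 - \<theta>) + b * \<theta>)\<^sup>2 * ((1 / (a * p)) * (1 + (b / a) * (e - ei)) / (1 + e * (b / a)))
    = ((1 / p) * (1 + (e - ei)) / (1 + e)) *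
      (a * (1 - \<theta> * (1 - b / a))\<^sup>2 + ei / (1 + e - ei) * (a * (1 - \<theta> * (1 - b / a))\<^sup>2 * (1 - b / a) / (1 + e * (b / a))))"
proof -
  define g where "g = b / a"
  define S where "S = (1 - \<theta> * (1 - g))"
  have g: "g > 0" unfolding g_def using a b by simp
  have sq: "(a * (1 - \<theta>) + b * \<theta>)\<^sup>2 = a\<^sup>2 * S\<^sup>2"
    unfolding S_def g_def using a by (simp add: field_simps power2_eq_square)
  have L: "(a * (1 - \<theta>) + b * \<theta>)\<^sup>2 * ((1 / (a * p)) * (1 + g * (e - ei)) / (1 + e * g))
     = (a * S\<^sup>2 / p) * ((1 + g * (e - ei)) / (1 + e * g))"
  proof -
    have gen: "a\<^sup>2 * Q / (a * R) = a * Q / R" for Q R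
      using a by (simp add: power2_eq_square)
    show ?thesis unfolding sq times_divide_eq_right[symmetric] mult.assoc[of "1 / (a * p)"]
      using gen by (simp add: mult.assoc)
  qed
  have R: "((1 / p) * (1 + (e - ei)) / (1 + e)) *
      (a * S\<^sup>2 + ei / (1 + e - ei) * (a * S\<^sup>2 * (1 - g) / (1 + e * g)))
     = (a * S\<^sup>2 / p) * (((1 + (e - ei)) / (1 + e)) * (1 + ei / (1 + e - ei) * ((1 - g) / (1 + e * g))))"
  proof -
    have gen: "(1 / p) * X / Y * (Q + Z * (Q * W / V)) = (Q / p) * (X / Y * (1 + Z * (W / V)))"
      for X Y Q Z W V :: real
      by (simp add: algebra_simps)
    show ?thesis by (rule gen)
  qed
  have "(a * (1 - \<theta>) + b * \<theta>)\<^sup>2 * ((1 / (a * p)) * (1 + g * (e - ei)) / (1 + e * g))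
     = ((1 / p) * (1 + (e - ei)) / (1 + e)) *
      (a * S\<^sup>2 + ei / (1 + e - ei) * (a * S\<^sup>2 * (1 - g) / (1 + e * g)))"
    unfolding L R core_id[OF g ei] ..
  then show ?thesis unfolding g_def[symmetric] S_def[symmetric] .

qed

lemma frac_mono_iff:
  fixes c s x y :: real
  assumes c: "c > 0" and x: "0 \<le> x" "x \<le> s" and y: "0 \<le> y" "y \<le> s"
  shows "(c * x / (1 + c * s - c * x) \<le> c * y / (1 + c * s - c * y)) \<longleftrightarrow> x \<le> y"
proof -
  have "c * x \<le> c * s" using c x by (simp add: mult_left_mono)
  then have A: "1 + c * s - c * x > 0" by simp
  have "c * y \<le> c * s" using c y by (simp add: mult_left_mono)
  then have B: "1 + c * s - c * y > 0" by simp
  have cs: "1 + c * s > 0" using c x by (simp add: add_pos_nonneg)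
  have "(c * x / (1 + c * s - c * x) \<le> c * y / (1 + c * s - c * y))
      \<longleftrightarrow> c * x * (1 + c * s - c * y) \<le> c * y * (1 + c * s - c * x)"
    using A B by (simp add: divide_le_eq le_divide_eq field_simps)
  also have "c * x * (1 + c * s - c * y) = c * (1 + c * s) * x - c * c * x * y" by (simp add: algebra_simps)
  also have "c * y * (1 + c * s - c * x) = c * (1 + c * s) * y - c * c * x * y" by (simp add: algebra_simps)
  also have "(c * (1 + c * s) * x - c * c * x * y \<le> c * (1 + c * s) * y - c * c * x * y) \<longleftrightarrow> x \<le> y"
    using c cs by simp
  finally show ?thesis .
qed

theorem mainTheorem10:
  fixes psi_id :: "real ^ 'n" and w :: "real ^ 'n"
    and psi_f \<theta> :: real and T :: nat and \<alpha> \<beta> :: "nat \<Rightarrow> real"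
  assumes psi_id_pos: "\<And>i. psi_id $ i > 0"
    and psi_f_pos: "psi_f > 0"
    and w_nz: "w \<noteq> 0"
    and theta: "0 \<le> \<theta>" "\<theta> \<le> 1"
    and alpha_pos: "\<And>t. t \<in> {1..T} \<Longrightarrow> \<alpha> t > 0"
    and beta_pos: "\<And>t. t \<in> {1..T} \<Longrightarrow> \<beta> t > 0"
    and alpha_sum: "(\<Sum>t\<in>{1..T}. \<alpha> t) = 1"
    and beta_sum: "(\<Sum>t\<in>{1..T}. \<beta> t) = 1"
  defines "\<eta>1 \<equiv> psi_f * (\<Sum>j\<in>UNIV. (w $ j)\<^sup>2 / psi_id $ j)"
    and "\<Delta> \<equiv> (\<Sum>t\<in>{1..T}. \<alpha> t * (1 - \<theta> * (1 - \<beta> t / \<alpha> t))\<^sup>2 * (1 - \<beta> t / \<alpha> t)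
                 / (1 + psi_f * (\<Sum>j\<in>UNIV. (w $ j)\<^sup>2 / psi_id $ j) * (\<beta> t / \<alpha> t)))"
    and "\<eta>1i \<equiv> (\<lambda>i. (w $ i)\<^sup>2 * psi_f / psi_id $ i)"
    and "U \<equiv> (\<lambda>i. Upsilon psi_id psi_f w \<theta> T \<alpha> \<beta> (axis i 1))"
    and "r \<equiv> (\<lambda>i. (w $ i)\<^sup>2 / psi_id $ i)"
  shows "(\<forall>i. U i = 1 + \<theta>\<^sup>2 * ((\<Sum>t\<in>{1..T}. (\<beta> t)\<^sup>2 / \<alpha> t) - 1)
                    + \<eta>1i i / (1 + \<eta>1 - \<eta>1i i) * \<Delta>)
       \<and> (\<Delta> \<ge> 0 \<longrightarrow> argmax_set r \<subseteq> argmax_set U)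
       \<and> (\<Delta> \<le> 0 \<longrightarrow> argmin_set r \<subseteq> argmax_set U)
       \<and> (\<Delta> > 0 \<longrightarrow> argmax_set U = argmax_set r)
       \<and> (\<Delta> < 0 \<longrightarrow> argmax_set U = argmin_set r)"
proof -
  define s where "s = (\<Sum>j\<in>UNIV. (w $ j)\<^sup>2 / psi_id $ j)"
  have r0: "r i \<ge> 0" for i unfolding r_def using psi_id_pos[of i] by simp
  have r_le: "r i \<le> s" for i
    unfolding s_def r_def using psi_id_pos
    by (intro member_le_sum) (auto simp: less_imp_le)
  have eta1: "\<eta>1 = psi_f * s" unfolding \<eta>1_def s_def ..
  have eta1i: "\<eta>1i i = psi_f * r i" for i unfolding \<eta>1i_def r_def by simp
  define C where "C = 1 + \<theta>\<^sup>2 * ((\<Sum>t\<in>{1..T}. (\<beta> t)\<^sup>2 / \<alpha> t) - 1)"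
  define h where "h = (\<lambda>i. \<eta>1i i / (1 + \<eta>1 - \<eta>1i i))"
  have sumS: "(\<Sum>t\<in>{1..T}. \<alpha> t * (1 - \<theta> * (1 - \<beta> t / \<alpha> t))\<^sup>2) = C"
  proof -
    have "(\<Sum>t\<in>{1..T}. \<alpha> t * (1 - \<theta> * (1 - \<beta> t / \<alpha> t))\<^sup>2)
        = (\<Sum>t\<in>{1..T}. (1 - \<theta>)\<^sup>2 * \<alpha> t + 2 * \<theta> * (1 - \<theta>) * \<beta> t + \<theta>\<^sup>2 * ((\<beta> t)\<^sup>2 / \<alpha> t))"
    proof (rule sum.cong)
      fix t assume t: "t \<in> {1..T}"
      have a: "\<alpha> t \<noteq> 0" using alpha_pos[OF t] by simp
      show "\<alpha> t * (1 - \<theta> * (1 - \<beta> t / \<alpha> t))\<^sup>2 = (1 - \<theta>)\<^sup>2 * \<alpha> t + 2 * \<theta> * (1 - \<theta>) * \<beta> t + \<theta>\<^sup>2 * ((\<beta> t)\<^sup>2 / \<alpha> t)"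
        using a by (simp add: field_simps power2_eq_square)
    qed simp
    also have "\<dots> = (1 - \<theta>)\<^sup>2 * (\<Sum>t\<in>{1..T}. \<alpha> t) + 2 * \<theta> * (1 - \<theta>) * (\<Sum>t\<in>{1..T}. \<beta> t) + \<theta>\<^sup>2 * (\<Sum>t\<in>{1..T}. (\<beta> t)\<^sup>2 / \<alpha> t)"
      by (simp add: sum.distrib sum_distrib_left)
    also have "\<dots> = C" unfolding alpha_sum beta_sum C_def by (simp add: algebra_simps power2_eq_square)
    finally show ?thesis .
  qed
  have Uform: "U i = C + h i * \<Delta>" for i
  proof -
    define p where "p = psi_id $ i"
    define e where "e = \<eta>1"
    define ei where "ei = \<eta>1i i"
    have p: "p > 0" unfolding p_def by (rule psi_id_pos)
    have ei0: "0 \<le> ei" unfolding ei_def eta1i using psi_f_pos r0[of i] by simp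
    have eie: "ei \<le> e" unfolding ei_def e_def eta1i eta1 using psi_f_pos r_le[of i]
      by (simp add: mult_left_mono)
    define Q0 where "Q0 = (1 / p) * (1 + (e - ei)) / (1 + e)"
    have Q0nz: "Q0 \<noteq> 0" unfolding Q0_def using p ei0 eie by simp
    have q0: "qform (matrix_inv (impact psi_id psi_f w 1 1)) (axis i 1) = Q0"
      using q_val[OF psi_id_pos, of 1 1 psi_f w i] psi_f_pos
      unfolding Q0_def p_def e_def ei_def \<eta>1_def \<eta>1i_def by simp
    have tm: "(\<alpha> t * (1 - \<theta>) + \<beta> t * \<theta>)\<^sup>2 * qform (matrix_inv (impact psi_id psi_f w (\<alpha> t) (\<beta> t))) (axis i 1)
       = Q0 * (\<alpha> t * (1 - \<theta> * (1 - \<beta> t / \<alpha> t))\<^sup>2 + ei / (1 + e - ei) *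
          (\<alpha> t * (1 - \<theta> * (1 - \<beta> t / \<alpha> t))\<^sup>2 * (1 - \<beta> t / \<alpha> t) / (1 + e * (\<beta> t / \<alpha> t))))"
      if t: "t \<in> {1..T}" for t
    proof -
      have qt: "qform (matrix_inv (impact psi_id psi_f w (\<alpha> t) (\<beta> t))) (axis i 1)
         = (1 / (\<alpha> t * p)) * (1 + (\<beta> t / \<alpha> t) * (e - ei)) / (1 + e * (\<beta> t / \<alpha> t))"
        using q_val[OF psi_id_pos alpha_pos[OF t] beta_pos[OF t] psi_f_pos, of w i]
        unfolding p_def e_def ei_def \<eta>1_def \<eta>1i_def by simp
      show ?thesis unfolding qt Q0_def
        by (rule scalar_id[OF alpha_pos[OF t] beta_pos[OF t] p ei0 eie])
    qed
    have Delta: "\<Delta> = (\<Sum>t\<in>{1..T}. \<alpha> t * (1 - \<theta> * (1 - \<beta> t / \<alpha> t))\<^sup>2 * (1 - \<beta> t / \<alpha> t) / (1 + e * (\<beta> t / \<alpha> t)))"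
      unfolding \<Delta>_def e_def \<eta>1_def ..
    have "(\<Sum>t\<in>{1..T}. (\<alpha> t * (1 - \<theta>) + \<beta> t * \<theta>)\<^sup>2 * qform (matrix_inv (impact psi_id psi_f w (\<alpha> t) (\<beta> t))) (axis i 1))
       = (\<Sum>t\<in>{1..T}. Q0 * (\<alpha> t * (1 - \<theta> * (1 - \<beta> t / \<alpha> t))\<^sup>2 + ei / (1 + e - ei) *
          (\<alpha> t * (1 - \<theta> * (1 - \<beta> t / \<alpha> t))\<^sup>2 * (1 - \<beta> t / \<alpha> t) / (1 + e * (\<beta> t / \<alpha> t)))))"
      by (rule sum.cong) (simp_all add: tm)
    also have "\<dots> = Q0 * (C + ei / (1 + e - ei) * \<Delta>)"
      unfolding Delta sumS[symmetric] by (simp only: distrib_left sum.distrib sum_distrib_left)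
    finally have num: "(\<Sum>t\<in>{1..T}. (\<alpha> t * (1 - \<theta>) + \<beta> t * \<theta>)\<^sup>2 * qform (matrix_inv (impact psi_id psi_f w (\<alpha> t) (\<beta> t))) (axis i 1))
       = Q0 * (C + ei / (1 + e - ei) * \<Delta>)" .
    have "U i = Q0 * (C + ei / (1 + e - ei) * \<Delta>) / Q0"
      unfolding U_def Upsilon_def num q0 ..
    also have "\<dots> = C + h i * \<Delta>" using Q0nz unfolding h_def e_def ei_def by simp
    finally show ?thesis .
  qed
  have hmono: "h i \<le> h j \<longleftrightarrow> r i \<le> r j" for i j
    unfolding h_def eta1i eta1
    using frac_mono_iff[OF psi_f_pos r0[of i] r_le[of i] r0[of j] r_le[of j]] by simp
  have Ule: "U j \<le> U i \<longleftrightarrow> h j * \<Delta> \<le> h i * \<Delta>" for i j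
    unfolding Uform by simp
  show ?thesis
  proof (intro conjI impI allI)
    fix i show "U i = 1 + \<theta>\<^sup>2 * ((\<Sum>t\<in>{1..T}. (\<beta> t)\<^sup>2 / \<alpha> t) - 1) + \<eta>1i i / (1 + \<eta>1 - \<eta>1i i) * \<Delta>"
      using Uform[of i] unfolding C_def h_def .
  next
    assume D: "\<Delta> \<ge> 0"
    show "argmax_set r \<subseteq> argmax_set U"
      unfolding argmax_set_def using D hmono Ule by (auto intro: mult_right_mono)
  next
    assume D: "\<Delta> \<le> 0"
    show "argmin_set r \<subseteq> argmax_set U"
      unfolding argmax_set_def argmin_set_def using D hmono Ule by (auto intro: mult_right_mono_neg)
  next
    assume D: "\<Delta> > 0"
    show "argmax_set U = argmax_set r"
      unfolding argmax_set_def using D hmono Ule by auto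
  next
    assume D: "\<Delta> < 0"
    show "argmax_set U = argmin_set r"
      unfolding argmax_set_def argmin_set_def using D hmono Ule by auto
  qed
qed

end
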